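(* Consider the two-stage cooperative cellular/D2D recovery model described in the context, with lossless links in the second stage, and suppose the algorithm NCMI-Instant (described in the context) is used. Then its packet completion time $T$ satisfies \[ T \leq \left\lceil \min\Big(\max \big(\tfrac{M}{2},|\mathcal{M}_c|\big),\ \max\big(|\mathcal{M}_c|,\tfrac{1}{3}\big(2 \min_{n \in \mathcal{N}} |\mathcal{W}_n|+|\mathcal{M}_d|\big), \tfrac{1}{2}\big(\min_{n \in \mathcal{N}} |\mathcal{W}_n|+|\mathcal{M}_d|\big)\big)\Big) \right\rceil . \]
   Context: Model: a set $\mathcal{N}$ of $N\ge 2$ cooperating mobile devices want a common finite set $\mathcal{M}$ of packets, $M=|\mathcal{M}|$. After a lossy first-stage cellular broadcast, device $n$ holds its Has set $\mathcal{H}_n\subseteq\mathcal{M}$ and misses its Wants set $\mathcal{W}_n=\mathcal{M}\setminus\mathcal{H}_n$; every packet of $\mathcal{M}$ is wanted by at least one device. In the second stage time is slotted; in each slot the source (holding all packets) may broadcast one coded packet over cellular links to all devices and simultaneously one device may broadcast over D2D links to all other devices one coded packet composed only of packets it holds. The packet completion time $T$ is the number of second-stage slots until every device has decoded all packets of its Wants set. Second-stage links are lossless. Grouping (Algorithm 1): process $p_1,\dots,p_M$ in order; for $p_m$ form a length-$N$ vector $v_m$ with $v_m[n]=p_m$ if $p_m\in\mathcal{W}_n$, else NULL. If a previously formed vector $v_{m'}$ has $v_{m'}[n]=\mathrm{NULL}$ for all $n$ with $v_m[n]=p_m$, replace $v_{m'}$ by $v_{m'}+v_m$ (entrywise, $p+\mathrm{NULL}=p$)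 and discard $v_m$. Each final vector gives an instantly decodable coded packet, the XOR of its distinct non-NULL entries. $\mathcal{M}_c$: coded packets from vectors whose entries are all equal and non-NULL (packets wanted by all devices); $\mathcal{M}_d$: from vectors with at least one NULL entry (sendable in one D2D slot by a device $x$ with $v[x]=\mathrm{NULL}$); $\mathcal{M}_l$: from the remaining vectors (no NULL, at least two distinct entries), each of which is sent over D2D by splitting it into two parts each held by some device (two D2D slots). NCMI-Instant (lossless): compute $\mathcal{M}_c,\mathcal{M}_l,\mathcal{M}_d$ once. In each slot the source sends a not-yet-sent packet from $\mathcal{M}_c$ if any remain, else from $\mathcal{M}_l$, else from $\mathcal{M}_d$; simultaneously a device sends a not-yet-sent packet of $\mathcal{M}_d$ if any remain, and otherwise one part of a not-yet-sent packet of $\mathcal{M}_l$. Each coded packet is sent once (across both interfaces). *)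

theory Defs
  imports Complex_Main
begin

(* Devices are 0..<N, packets are of type 'p. The packet set M is given as a
   duplicate-free list ps = [p_1,...,p_M] (its order is the processing order of
   Algorithm 1).  H n is the Has set of device n. *)

type_synonym 'p vec = "nat \<Rightarrow> 'p option"   (* None = NULL; only entries n < N matter *)

definition wants :: "'p list \<Rightarrow> (nat \<Rightarrow> 'p set) \<Rightarrow> nat \<Rightarrow> 'p set" where
  "wants ps H n = set ps - H n"

definition mkvec :: "nat \<Rightarrow> 'p list \<Rightarrow> (nat \<Rightarrow> 'p set) \<Rightarrow> 'p \<Rightarrow> 'p vec" where
  "mkvec N ps H p = (\<lambda>n. if n < N \<and> p \<in> wants ps H n then Some p else None)"

definition mergeable :: "nat \<Rightarrow> 'p vec \<Rightarrow> 'p vec \<Rightarrow> bool" where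
  "mergeable N u v = (\<forall>n<N. v n \<noteq> None \<longrightarrow> u n = None)"

definition merge :: "'p vec \<Rightarrow> 'p vec \<Rightarrow> 'p vec" where
  "merge u v = (\<lambda>n. case u n of None \<Rightarrow> v n | Some q \<Rightarrow> Some q)"

fun insert_vec :: "nat \<Rightarrow> 'p vec \<Rightarrow> 'p vec list \<Rightarrow> 'p vec list" where
  "insert_vec N v [] = [v]"
| "insert_vec N v (u # us) =
     (if mergeable N u v then merge u v # us else u # insert_vec N v us)"

definition grouping :: "nat \<Rightarrow> 'p list \<Rightarrow> (nat \<Rightarrow> 'p set) \<Rightarrow> 'p vec list" where
  "grouping N ps H = foldl (\<lambda>vs p. insert_vec N (mkvec N ps H p) vs) [] ps"

(* the packets XORed in the coded packet of a vector (its distinct non-NULL entries) *)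
definition coded :: "nat \<Rightarrow> 'p vec \<Rightarrow> 'p set" where
  "coded N v = {p. \<exists>n<N. v n = Some p}"

definition is_Mc :: "nat \<Rightarrow> 'p vec \<Rightarrow> bool" where
  "is_Mc N v = ((\<forall>n<N. v n \<noteq> None) \<and> (\<forall>n<N. \<forall>m<N. v n = v m))"

definition is_Md :: "nat \<Rightarrow> 'p vec \<Rightarrow> bool" where
  "is_Md N v = (\<exists>n<N. v n = None)"

definition is_Ml :: "nat \<Rightarrow> 'p vec \<Rightarrow> bool" where
  "is_Ml N v = (\<not> is_Mc N v \<and> \<not> is_Md N v)"

definition Mc :: "nat \<Rightarrow> 'p list \<Rightarrow> (nat \<Rightarrow> 'p set) \<Rightarrow> 'p vec list" where
  "Mc N ps H = filter (is_Mc N) (grouping N ps H)"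

definition Md :: "nat \<Rightarrow> 'p list \<Rightarrow> (nat \<Rightarrow> 'p set) \<Rightarrow> 'p vec list" where
  "Md N ps H = filter (is_Md N) (grouping N ps H)"

definition Ml :: "nat \<Rightarrow> 'p list \<Rightarrow> (nat \<Rightarrow> 'p set) \<Rightarrow> 'p vec list" where
  "Ml N ps H = filter (is_Ml N) (grouping N ps H)"

definition valid_split :: "nat \<Rightarrow> 'p list \<Rightarrow> (nat \<Rightarrow> 'p set)
    \<Rightarrow> ('p vec \<Rightarrow> 'p set \<times> 'p set) \<Rightarrow> bool" where
  "valid_split N ps H sp = (\<forall>v \<in> set (Ml N ps H).
      fst (sp v) \<union> snd (sp v) = coded N v \<and> fst (sp v) \<inter> snd (sp v) = {} \<and>
      fst (sp v) \<noteq> {} \<and> snd (sp v) \<noteq> {} \<and>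
      (\<exists>x<N. fst (sp v) \<subseteq> H x) \<and> (\<exists>x<N. snd (sp v) \<subseteq> H x))"

(* scheduler state: not-yet-sent packets of M_c, M_l, M_d, and an M_l packet
   whose first part has been sent over D2D (second part pending) *)
type_synonym 'p sstate = "'p vec list \<times> 'p vec list \<times> 'p vec list \<times> 'p vec option"

(* one slot of NCMI-Instant: returns the contents (packet sets XORed) of the
   transmissions of this slot (cellular, then D2D) and the new state *)
definition ncmi_step :: "nat \<Rightarrow> ('p vec \<Rightarrow> 'p set \<times> 'p set) \<Rightarrow> 'p sstate
    \<Rightarrow> 'p set list \<times> 'p sstate" where
  "ncmi_step N sp st = (case st of (cs, ls, ds, pend) \<Rightarrow>
     let (tx1, cs1, ls1, ds1) =
           (if cs \<noteq> [] then ([coded N (hd cs)], tl cs, ls, ds)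
            else if ls \<noteq> [] then ([coded N (hd ls)], cs, tl ls, ds)
            else if ds \<noteq> [] then ([coded N (hd ds)], cs, ls, tl ds)
            else ([], cs, ls, ds));
         (tx2, ls2, ds2, pend2) =
           (if ds1 \<noteq> [] then ([coded N (hd ds1)], ls1, tl ds1, pend)
            else (case pend of
                    Some v \<Rightarrow> ([snd (sp v)], ls1, ds1, None)
                  | None \<Rightarrow> (if ls1 \<noteq> [] then ([fst (sp (hd ls1))], tl ls1, ds1, Some (hd ls1))
                             else ([], ls1, ds1, None))))
     in (tx1 @ tx2, (cs1, ls2, ds2, pend2)))"

definition ncmi_init :: "nat \<Rightarrow> 'p list \<Rightarrow> (nat \<Rightarrow> 'p set) \<Rightarrow> 'p sstate" where
  "ncmi_init N ps H = (Mc N ps H, Ml N ps H, Md N ps H, None)"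

fun ncmi_state :: "nat \<Rightarrow> 'p list \<Rightarrow> (nat \<Rightarrow> 'p set) \<Rightarrow> ('p vec \<Rightarrow> 'p set \<times> 'p set)
    \<Rightarrow> nat \<Rightarrow> 'p sstate" where
  "ncmi_state N ps H sp 0 = ncmi_init N ps H"
| "ncmi_state N ps H sp (Suc k) = snd (ncmi_step N sp (ncmi_state N ps H sp k))"

(* transmissions in slot s (s \<ge> 1) *)
definition ncmi_tx :: "nat \<Rightarrow> 'p list \<Rightarrow> (nat \<Rightarrow> 'p set) \<Rightarrow> ('p vec \<Rightarrow> 'p set \<times> 'p set)
    \<Rightarrow> nat \<Rightarrow> 'p set list" where
  "ncmi_tx N ps H sp s = fst (ncmi_step N sp (ncmi_state N ps H sp (s - 1)))"

definition decoded_by :: "nat \<Rightarrow> 'p list \<Rightarrow> (nat \<Rightarrow> 'p set) \<Rightarrow> ('p vec \<Rightarrow> 'p set \<times> 'p set)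
    \<Rightarrow> nat \<Rightarrow> nat \<Rightarrow> 'p \<Rightarrow> bool" where
  "decoded_by N ps H sp t n p =
     (\<exists>s\<in>{1..t}. \<exists>S\<in>set (ncmi_tx N ps H sp s). p \<in> S \<and> S - {p} \<subseteq> H n)"

definition all_decoded :: "nat \<Rightarrow> 'p list \<Rightarrow> (nat \<Rightarrow> 'p set) \<Rightarrow> ('p vec \<Rightarrow> 'p set \<times> 'p set)
    \<Rightarrow> nat \<Rightarrow> bool" where
  "all_decoded N ps H sp t = (\<forall>n<N. \<forall>p\<in>wants ps H n. decoded_by N ps H sp t n p)"

definition completion_time :: "nat \<Rightarrow> 'p list \<Rightarrow> (nat \<Rightarrow> 'p set) \<Rightarrow> ('p vec \<Rightarrow> 'p set \<times> 'p set)
    \<Rightarrow> nat" where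
  "completion_time N ps H sp = (LEAST t. all_decoded N ps H sp t)"

end

theory Submission
  imports Defs
begin


definition dn :: "'p sstate \<Rightarrow> bool" where
  "dn st = (case st of (cs,ls,ds,pend) \<Rightarrow> cs = [] \<and> ls = [] \<and> ds = [] \<and> pend = None)"

definition iv :: "'p sstate \<Rightarrow> bool" where
  "iv st = (case st of (cs,ls,ds,pend) \<Rightarrow> pend \<noteq> None \<longrightarrow> ds = [])"

definition gA :: "'p sstate \<Rightarrow> real" where
  "gA st = (case st of (cs,ls,ds,pend) \<Rightarrow> max (real (length cs))
     ((real (length cs) + 2 * real (length ls) + real (length ds) + (if pend = None then 0 else 1)) / 2))"

definition gB :: "'p sstate \<Rightarrow> real" where
  "gB st = (case st of (cs,ls,ds,pend) \<Rightarrow> max (real (length cs))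
     (max ((2 * real (length cs) + 2 * real (length ls) + real (length ds) + (if pend = None then 0 else 1)) / 3)
          ((real (length cs) + real (length ls) + real (length ds)) / 2)))"

lemma list3_cases: "(xs = [] \<Longrightarrow> P) \<Longrightarrow> (\<And>x. xs = [x] \<Longrightarrow> P) \<Longrightarrow> (\<And>x y r. xs = x#y#r \<Longrightarrow> P) \<Longrightarrow> P"
  by (metis list.exhaust)

lemma step_done: "dn st \<Longrightarrow> snd (ncmi_step N sp st) = st"
  by (cases st) (auto simp: dn_def ncmi_step_def)

lemma step_iv: "iv st \<Longrightarrow> iv (snd (ncmi_step N sp st))"
  apply (cases st)
  apply (auto simp: iv_def ncmi_step_def Let_def split: option.splits if_splits)
  done

lemma pos_A: "\<not> dn st \<Longrightarrow> gA st > 0"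
  apply (cases st)
  subgoal for cs ls ds pend by (cases cs; cases ls; cases ds; cases pend) (auto simp: dn_def gA_def less_max_iff_disj)
  done

lemma pos_B: "\<not> dn st \<Longrightarrow> gB st > 0"
  apply (cases st)
  subgoal for cs ls ds pend by (cases cs; cases ls; cases ds; cases pend) (auto simp: dn_def gB_def less_max_iff_disj)
  done

lemma dec_A: "iv st \<Longrightarrow> \<not> dn st \<Longrightarrow> dn (snd (ncmi_step N sp st)) \<or> gA (snd (ncmi_step N sp st)) + 1 \<le> gA st"
proof -
  assume a: "iv st" "\<not> dn st"
  obtain cs ls ds pend where st: "st = (cs,ls,ds,pend)" by (cases st) auto
  show ?thesis using a unfolding st
    apply (cases cs; cases ls rule: list3_cases; cases ds rule: list3_cases; cases pend)
    apply (auto simp: iv_def dn_def gA_def ncmi_step_def Let_def max_def split: if_splits)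
    
    done
qed

lemma dec_B: "iv st \<Longrightarrow> \<not> dn st \<Longrightarrow> dn (snd (ncmi_step N sp st)) \<or> gB (snd (ncmi_step N sp st)) + 1 \<le> gB st"
proof -
  assume a: "iv st" "\<not> dn st"
  obtain cs ls ds pend where st: "st = (cs,ls,ds,pend)" by (cases st) auto
  show ?thesis using a unfolding st
    apply (cases cs; cases ls rule: list3_cases; cases ds rule: list3_cases; cases pend)
    apply (auto simp: iv_def dn_def gB_def ncmi_step_def Let_def max_def split: if_splits)
    done
qed

lemma funpow_fix: "F st = st \<Longrightarrow> (F ^^ n) st = st"
  by (induction n) auto

lemma iter_gen:
  fixes g :: "'p sstate \<Rightarrow> real" and F :: "'p sstate \<Rightarrow> 'p sstate"
  assumes dec: "\<And>st. iv st \<Longrightarrow> \<not> dn st \<Longrightarrow> dn (F st) \<or> g (F st) + 1 \<le> g st"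
    and pos: "\<And>st. \<not> dn st \<Longrightarrow> g st > 0"
    and ivF: "\<And>st. iv st \<Longrightarrow> iv (F st)" and dnF: "\<And>st. dn st \<Longrightarrow> F st = st"
  shows "iv st \<Longrightarrow> nat \<lceil>g st\<rceil> \<le> n \<Longrightarrow> dn ((F ^^ n) st)"
proof (induction n arbitrary: st)
  case 0
  then show ?case using pos[of st] by (cases "dn st") auto
next
  case (Suc n)
  show ?case
  proof (cases "dn st")
    case True
    then show ?thesis using funpow_fix[of F st] dnF by auto
  next
    case False
    have eq: "(F ^^ Suc n) st = (F ^^ n) (F st)" by (metis comp_apply funpow_Suc_right)
    show ?thesis
    proof (cases "dn (F st)")
      case True
      then show ?thesis using eq funpow_fix[of F "F st"] dnF by auto
    next
      case False2: False
      have "g (F st) + 1 \<le> g st" using dec[OF Suc.prems(1) False] False2 by auto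
      then have "\<lceil>g (F st)\<rceil> + 1 \<le> \<lceil>g st\<rceil>"
        by (metis ceiling_add_one ceiling_mono)
      then have "nat \<lceil>g (F st)\<rceil> \<le> n" using Suc.prems(2) by linarith
      then show ?thesis using Suc.IH[of "F st"] ivF[OF Suc.prems(1)] eq by auto
    qed
  qed
qed

lemma step_trace:
  assumes "ncmi_step N sp (cs,ls,ds,pend) = (tx,(cs',ls',ds',pend'))"
  shows "set ls' \<subseteq> set ls"
    and "pend' = None \<or> pend' = pend \<or> (\<exists>v. pend' = Some v \<and> v \<in> set ls \<and> fst (sp v) \<in> set tx)"
    and "v \<in> set cs \<or> v \<in> set ls \<or> v \<in> set ds \<or> pend = Some v \<Longrightarrow>
         v \<in> set cs' \<or> v \<in> set ls' \<or> v \<in> set ds' \<or> pend' = Some v \<or> coded N v \<in> set tx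
         \<or> (pend = Some v \<and> snd (sp v) \<in> set tx)"
  using assms
  by (cases cs; cases ls rule: list3_cases; cases ds rule: list3_cases; cases pend;
      auto simp: ncmi_step_def Let_def split: if_splits)+

lemma coded_finite: "finite (coded N u)"
proof -
  have "coded N u \<subseteq> (\<lambda>n. the (u n)) ` {..<N}" unfolding coded_def by force
  then show ?thesis by (rule finite_subset) auto
qed

lemma ins_set: "set (insert_vec N v us) \<subseteq> set us \<union> {v} \<union> {merge u v | u. u \<in> set us \<and> mergeable N u v}"
  by (induction us) auto

lemma ins_keep: "u \<in> set us \<Longrightarrow> \<exists>w \<in> set (insert_vec N v us). \<forall>n. u n \<noteq> None \<longrightarrow> w n = u n"
proof (induction us)
  case Nil then show ?case by simp
next
  case (Cons a us)
  show ?case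
  proof (cases "u = a")
    case True
    then show ?thesis by (auto simp: merge_def split: option.splits)
  next
    case False
    then have uu: "u \<in> set us" using Cons.prems by simp
    show ?thesis
    proof (cases "mergeable N a v")
      case True
      then show ?thesis using uu by auto
    next
      case False
      from Cons.IH[OF uu] obtain w where "w \<in> set (insert_vec N v us)" "\<forall>n. u n \<noteq> None \<longrightarrow> w n = u n" by blast
      then show ?thesis using False by auto
    qed
  qed
qed

lemma ins_new: "\<exists>w \<in> set (insert_vec N v us). \<forall>n<N. v n \<noteq> None \<longrightarrow> w n = v n"
proof (induction us)
  case Nil then show ?case by simp
next
  case (Cons a us)
  show ?case
  proof (cases "mergeable N a v")
    case True
    have "\<forall>n<N. v n \<noteq> None \<longrightarrow> merge a v n = v n"
      using True unfolding mergeable_def merge_def by auto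
    then show ?thesis using True by auto
  next
    case False
    then show ?thesis using Cons.IH by auto
  qed
qed

lemma ins_sum:
  fixes f :: "'p vec \<Rightarrow> nat"
  assumes "f v \<le> k" and "\<And>u. mergeable N u v \<Longrightarrow> f (merge u v) \<le> f u + k"
  shows "sum_list (map f (insert_vec N v us)) \<le> sum_list (map f us) + k"
  using assms by (induction us) auto

lemma coded_merge: "coded N (merge u v) \<subseteq> coded N u \<union> coded N v"
  unfolding coded_def merge_def by (auto split: option.splits)

lemma coded_mkvec: "coded N (mkvec N ps H p) \<subseteq> {p}"
  unfolding coded_def mkvec_def by (auto split: if_splits)

definition Gp :: "nat \<Rightarrow> 'p list \<Rightarrow> (nat \<Rightarrow> 'p set) \<Rightarrow> 'p vec \<Rightarrow> bool" where
  "Gp N ps H u = ((\<forall>n<N. \<forall>p. u n = Some p \<longrightarrow> p \<in> wants ps H n) \<and>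
     (\<forall>n<N. \<forall>m<N. \<forall>q. u m = Some q \<longrightarrow> q \<in> wants ps H n \<longrightarrow> u n = Some q) \<and> coded N u \<noteq> {})"

lemma Gp_mkvec: "n0 < N \<Longrightarrow> p \<in> wants ps H n0 \<Longrightarrow> Gp N ps H (mkvec N ps H p)"
  unfolding Gp_def
proof (intro conjI allI impI)
  assume n0: "n0 < N" "p \<in> wants ps H n0"
  show "\<And>n pa. n < N \<Longrightarrow> mkvec N ps H p n = Some pa \<Longrightarrow> pa \<in> wants ps H n"
    by (simp add: mkvec_def split: if_splits)
  show "\<And>n m q. n < N \<Longrightarrow> m < N \<Longrightarrow> mkvec N ps H p m = Some q \<Longrightarrow> q \<in> wants ps H n \<Longrightarrow> mkvec N ps H p n = Some q"
    by (simp add: mkvec_def split: if_splits)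
  have "p \<in> coded N (mkvec N ps H p)" unfolding coded_def mkvec_def using n0 by auto
  then show "coded N (mkvec N ps H p) \<noteq> {}" by blast
qed

lemma Gp_merge: "Gp N ps H u \<Longrightarrow> Gp N ps H v \<Longrightarrow> mergeable N u v \<Longrightarrow> Gp N ps H (merge u v)"
  unfolding Gp_def
proof (intro conjI allI impI)
  assume a: "(\<forall>n<N. \<forall>p. u n = Some p \<longrightarrow> p \<in> wants ps H n) \<and>
     (\<forall>n<N. \<forall>m<N. \<forall>q. u m = Some q \<longrightarrow> q \<in> wants ps H n \<longrightarrow> u n = Some q) \<and> coded N u \<noteq> {}"
    and b: "(\<forall>n<N. \<forall>p. v n = Some p \<longrightarrow> p \<in> wants ps H n) \<and>
     (\<forall>n<N. \<forall>m<N. \<forall>q. v m = Some q \<longrightarrow> q \<in> wants ps H n \<longrightarrow> v n = Some q) \<and> coded N v \<noteq> {}"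
    and c: "mergeable N u v"
  show "\<And>n p. n < N \<Longrightarrow> merge u v n = Some p \<Longrightarrow> p \<in> wants ps H n"
  proof -
    fix n p assume h: "n < N" "merge u v n = Some p"
    show "p \<in> wants ps H n"
    proof (cases "u n")
      case None
      then have "v n = Some p" using h by (simp add: merge_def)
      then show ?thesis using b h by blast
    next
      case (Some r)
      then have "u n = Some p" using h by (simp add: merge_def)
      then show ?thesis using a h by blast
    qed
  qed
  show "\<And>n m q. n < N \<Longrightarrow> m < N \<Longrightarrow> merge u v m = Some q \<Longrightarrow> q \<in> wants ps H n \<Longrightarrow> merge u v n = Some q"
  proof -
    fix n m q assume h: "n < N" "m < N" "merge u v m = Some q" "q \<in> wants ps H n"
    show "merge u v n = Some q"
    proof (cases "u m")
      case (Some r)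
      then have "r = q" using h(3) by (simp add: merge_def)
      then have "u n = Some q" using a h Some by blast
      then show ?thesis by (simp add: merge_def)
    next
      case None
      then have "v m = Some q" using h(3) by (simp add: merge_def)
      then have "v n = Some q" using b h by blast
      then have "u n = None" using c h unfolding mergeable_def by auto
      then show ?thesis using \<open>v n = Some q\<close> by (simp add: merge_def)
    qed
  qed
  show "coded N (merge u v) \<noteq> {}"
  proof -
    obtain p where "p \<in> coded N u" using a by auto
    then show ?thesis unfolding coded_def merge_def by (force split: option.splits)
  qed
qed

definition Gf :: "nat \<Rightarrow> 'p list \<Rightarrow> (nat \<Rightarrow> 'p set) \<Rightarrow> 'p list \<Rightarrow> 'p vec list" where
  "Gf N ps H xs = foldl (\<lambda>vs p. insert_vec N (mkvec N ps H p) vs) [] xs"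

lemma Gf_snoc: "Gf N ps H (xs @ [x]) = insert_vec N (mkvec N ps H x) (Gf N ps H xs)"
  by (simp add: Gf_def)

lemma Gf_props:
  assumes "distinct xs" "\<forall>p\<in>set xs. \<exists>n<N. p \<in> wants ps H n"
  shows "(\<forall>u\<in>set (Gf N ps H xs). Gp N ps H u) \<and>
         (\<forall>A. sum_list (map (\<lambda>u. card (coded N u \<inter> A)) (Gf N ps H xs)) \<le> card (set xs \<inter> A)) \<and>
         (\<forall>p\<in>set xs. \<forall>n<N. p \<in> wants ps H n \<longrightarrow> (\<exists>u\<in>set (Gf N ps H xs). u n = Some p))"
  using assms
proof (induction xs rule: rev_induct)
  case Nil
  then show ?case by (simp add: Gf_def)
next
  case (snoc x xs)
  let ?v = "mkvec N ps H x"
  let ?G = "Gf N ps H xs"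
  have IH: "(\<forall>u\<in>set ?G. Gp N ps H u) \<and>
         (\<forall>A. sum_list (map (\<lambda>u. card (coded N u \<inter> A)) ?G) \<le> card (set xs \<inter> A)) \<and>
         (\<forall>p\<in>set xs. \<forall>n<N. p \<in> wants ps H n \<longrightarrow> (\<exists>u\<in>set ?G. u n = Some p))"
    using snoc by auto
  have xnot: "x \<notin> set xs" using snoc.prems by auto
  obtain n0 where n0: "n0 < N" "x \<in> wants ps H n0" using snoc.prems by auto
  have Gv: "Gp N ps H ?v" by (rule Gp_mkvec[OF n0])
  have P1: "\<forall>u\<in>set (Gf N ps H (xs @ [x])). Gp N ps H u"
  proof
    fix w assume "w \<in> set (Gf N ps H (xs @ [x]))"
    then have "w \<in> set ?G \<union> {?v} \<union> {merge u ?v | u. u \<in> set ?G \<and> mergeable N u ?v}"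
      using ins_set[of N ?v ?G] by (auto simp: Gf_snoc)
    then consider "w \<in> set ?G" | "w = ?v" | u where "u \<in> set ?G" "mergeable N u ?v" "w = merge u ?v"
      by blast
    then show "Gp N ps H w"
    proof cases
      case 1 then show ?thesis using IH by blast
    next
      case 2 then show ?thesis using Gv by simp
    next
      case 3 then show ?thesis using IH Gv Gp_merge by blast
    qed
  qed
  have P2: "\<forall>A. sum_list (map (\<lambda>u. card (coded N u \<inter> A)) (Gf N ps H (xs @ [x]))) \<le> card (set (xs @ [x]) \<inter> A)"
  proof
    fix A
    let ?k = "if x \<in> A then 1 else 0::nat"
    have cv: "card (coded N ?v \<inter> A) \<le> ?k"
    proof -
      have "coded N ?v \<inter> A \<subseteq> {x} \<inter> A" using coded_mkvec[of N ps H x] by blast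
      then have "card (coded N ?v \<inter> A) \<le> card ({x} \<inter> A)" by (rule card_mono[rotated]) auto
      then show ?thesis by (auto split: if_splits)
    qed
    have cm: "card (coded N (merge u ?v) \<inter> A) \<le> card (coded N u \<inter> A) + ?k" for u
    proof -
      have "coded N (merge u ?v) \<inter> A \<subseteq> (coded N u \<inter> A) \<union> (coded N ?v \<inter> A)"
        using coded_merge[of N u "mkvec N ps H x"] by blast
      then have "card (coded N (merge u ?v) \<inter> A) \<le> card ((coded N u \<inter> A) \<union> (coded N ?v \<inter> A))"
        by (rule card_mono[rotated]) (auto intro: coded_finite)
      also have "\<dots> \<le> card (coded N u \<inter> A) + card (coded N ?v \<inter> A)" by (rule card_Un_le)
      finally show ?thesis using cv by linarith
    qed
    have "sum_list (map (\<lambda>u. card (coded N u \<inter> A)) (Gf N ps H (xs @ [x])))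
        \<le> sum_list (map (\<lambda>u. card (coded N u \<inter> A)) ?G) + ?k"
      unfolding Gf_snoc by (rule ins_sum[OF cv cm])
    also have "\<dots> \<le> card (set xs \<inter> A) + ?k" using IH by auto
    also have "\<dots> = card (set (xs @ [x]) \<inter> A)"
      proof (cases "x \<in> A")
      case True
      then have "set (xs @ [x]) \<inter> A = insert x (set xs \<inter> A)" by auto
      then show ?thesis using xnot True by simp
    next
      case False
      then have "set (xs @ [x]) \<inter> A = set xs \<inter> A" by auto
      then show ?thesis using False by simp
    qed
    finally show "sum_list (map (\<lambda>u. card (coded N u \<inter> A)) (Gf N ps H (xs @ [x]))) \<le> card (set (xs @ [x]) \<inter> A)" .
  qed
  have P3: "\<forall>p\<in>set (xs @ [x]). \<forall>n<N. p \<in> wants ps H n \<longrightarrow> (\<exists>u\<in>set (Gf N ps H (xs @ [x])). u n = Some p)"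
  proof (intro ballI allI impI)
    fix p n assume h: "p \<in> set (xs @ [x])" "n < N" "p \<in> wants ps H n"
    show "\<exists>u\<in>set (Gf N ps H (xs @ [x])). u n = Some p"
    proof (cases "p = x")
      case True
      obtain w where "w \<in> set (insert_vec N ?v ?G)" "\<forall>n<N. ?v n \<noteq> None \<longrightarrow> w n = ?v n"
        using ins_new by blast
      moreover have "w n = Some x" using h True \<open>\<forall>n<N. ?v n \<noteq> None \<longrightarrow> w n = ?v n\<close>
        by (simp add: mkvec_def)
      ultimately show ?thesis using True by (auto simp: Gf_snoc)
    next
      case False
      then have "p \<in> set xs" using h by auto
      then obtain u where "u \<in> set ?G" "u n = Some p" using IH h by blast
      then obtain w where "w \<in> set (insert_vec N ?v ?G)" "\<forall>n. u n \<noteq> None \<longrightarrow> w n = u n"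
        using ins_keep by blast
      then have "w n = Some p" using \<open>u n = Some p\<close> by simp
      then show ?thesis using \<open>w \<in> set (insert_vec N ?v ?G)\<close> unfolding Gf_snoc by blast
    qed
  qed
  show ?case by (rule conjI[OF P1 conjI[OF P2 P3]])
qed



lemma state_funpow: "ncmi_state N ps H sp k = ((\<lambda>s. snd (ncmi_step N sp s)) ^^ k) (ncmi_init N ps H)"
  by (induction k) auto

definition handled :: "nat \<Rightarrow> 'p list \<Rightarrow> (nat \<Rightarrow> 'p set) \<Rightarrow> ('p vec \<Rightarrow> 'p set \<times> 'p set)
    \<Rightarrow> nat \<Rightarrow> 'p vec \<Rightarrow> bool" where
  "handled N ps H sp k v = ((\<exists>s\<in>{1..k}. coded N v \<in> set (ncmi_tx N ps H sp s)) \<or>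
     (v \<in> set (Ml N ps H) \<and> (\<exists>s\<in>{1..k}. fst (sp v) \<in> set (ncmi_tx N ps H sp s)) \<and>
        (\<exists>s\<in>{1..k}. snd (sp v) \<in> set (ncmi_tx N ps H sp s))))"

lemma trace_inv:
  "case ncmi_state N ps H sp k of (cs, ls, ds, pend) \<Rightarrow>
     set ls \<subseteq> set (Ml N ps H) \<and>
     (\<forall>v. pend = Some v \<longrightarrow> v \<in> set (Ml N ps H) \<and> (\<exists>s\<in>{1..k}. fst (sp v) \<in> set (ncmi_tx N ps H sp s))) \<and>
     (\<forall>v\<in>set (grouping N ps H). v \<in> set cs \<or> v \<in> set ls \<or> v \<in> set ds \<or> pend = Some v \<or> handled N ps H sp k v)"
proof (induction k)
  case 0
  show ?case
    by (auto simp: ncmi_init_def Mc_def Ml_def Md_def is_Ml_def)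
next
  case (Suc k)
  obtain cs ls ds pend where S: "ncmi_state N ps H sp k = (cs,ls,ds,pend)" by (rule prod_cases4)
  obtain tx cs' ls' ds' pend' where S': "ncmi_step N sp (cs,ls,ds,pend) = (tx,(cs',ls',ds',pend'))"
    by (rule prod_cases5)
  have S2: "ncmi_state N ps H sp (Suc k) = (cs',ls',ds',pend')" using S S' by simp
  have T2: "ncmi_tx N ps H sp (Suc k) = tx" using S S' by (simp add: ncmi_tx_def)
  have IH: "set ls \<subseteq> set (Ml N ps H)"
     "\<forall>v. pend = Some v \<longrightarrow> v \<in> set (Ml N ps H) \<and> (\<exists>s\<in>{1..k}. fst (sp v) \<in> set (ncmi_tx N ps H sp s))"
     "\<forall>v\<in>set (grouping N ps H). v \<in> set cs \<or> v \<in> set ls \<or> v \<in> set ds \<or> pend = Some v \<or> handled N ps H sp k v"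
    using Suc.IH S by auto
  note st = step_trace[OF S']
  have hmono: "handled N ps H sp k v \<Longrightarrow> handled N ps H sp (Suc k) v" for v
    unfolding handled_def by (meson atLeastAtMost_iff le_SucI)
  have A: "set ls' \<subseteq> set (Ml N ps H)" using st(1) IH(1) by blast
  have B: "\<forall>v. pend' = Some v \<longrightarrow> v \<in> set (Ml N ps H) \<and> (\<exists>s\<in>{1..Suc k}. fst (sp v) \<in> set (ncmi_tx N ps H sp s))"
  proof (intro allI impI)
    fix v assume pv: "pend' = Some v"
    from st(2) show "v \<in> set (Ml N ps H) \<and> (\<exists>s\<in>{1..Suc k}. fst (sp v) \<in> set (ncmi_tx N ps H sp s))"
    proof (elim disjE)
      assume "pend' = None" then show ?thesis using pv by simp
    next
      assume "pend' = pend"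
      then have "v \<in> set (Ml N ps H) \<and> (\<exists>s\<in>{1..k}. fst (sp v) \<in> set (ncmi_tx N ps H sp s))"
        using IH(2) pv by auto
      then show ?thesis by (meson atLeastAtMost_iff le_SucI)
    next
      assume "\<exists>v. pend' = Some v \<and> v \<in> set ls \<and> fst (sp v) \<in> set tx"
      then have "v \<in> set ls" "fst (sp v) \<in> set tx" using pv by auto
      then show ?thesis using IH(1) T2 by force
    qed
  qed
  have C: "\<forall>v\<in>set (grouping N ps H). v \<in> set cs' \<or> v \<in> set ls' \<or> v \<in> set ds' \<or> pend' = Some v \<or> handled N ps H sp (Suc k) v"
  proof
    fix v assume vg: "v \<in> set (grouping N ps H)"
    show "v \<in> set cs' \<or> v \<in> set ls' \<or> v \<in> set ds' \<or> pend' = Some v \<or> handled N ps H sp (Suc k) v"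
    proof (cases "handled N ps H sp k v")
      case True then show ?thesis using hmono by blast
    next
      case False
      then have "v \<in> set cs \<or> v \<in> set ls \<or> v \<in> set ds \<or> pend = Some v" using IH(3) vg by blast
      from st(3)[OF this] show ?thesis
      proof (elim disjE)
        assume "coded N v \<in> set tx"
        then have "handled N ps H sp (Suc k) v" unfolding handled_def using T2 by force
        then show ?thesis by blast
      next
        assume h: "pend = Some v \<and> snd (sp v) \<in> set tx"
        then have "v \<in> set (Ml N ps H)" "\<exists>s\<in>{1..k}. fst (sp v) \<in> set (ncmi_tx N ps H sp s)" using IH(2) by auto
        moreover have "\<exists>s\<in>{1..Suc k}. snd (sp v) \<in> set (ncmi_tx N ps H sp s)" using h T2 by force
        ultimately have "handled N ps H sp (Suc k) v" unfolding handled_def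
          by (meson atLeastAtMost_iff le_SucI)
        then show ?thesis by blast
      qed auto
    qed
  qed
  show ?case unfolding S2 using A B C by auto
qed

lemma grouping_Gf: "grouping N ps H = Gf N ps H ps"
  by (simp add: grouping_def Gf_def)

lemma decode_one:
  assumes vg: "v \<in> set (grouping N ps H)" and Gpv: "Gp N ps H v" and hn: "handled N ps H sp t v"
    and n: "n < N" and vn: "v n = Some p" and vs: "valid_split N ps H sp"
  shows "decoded_by N ps H sp t n p"
proof -
  have pc: "p \<in> coded N v" unfolding coded_def using n vn by auto
  have sub: "coded N v - {p} \<subseteq> H n"
  proof
    fix q assume "q \<in> coded N v - {p}"
    then obtain m where m: "m < N" "v m = Some q" "q \<noteq> p" unfolding coded_def by auto
    have qw: "q \<in> wants ps H m" using Gpv m unfolding Gp_def by blast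
    have "q \<notin> wants ps H n"
    proof
      assume "q \<in> wants ps H n"
      then have "v n = Some q" using Gpv m n unfolding Gp_def by blast
      then show False using vn m by simp
    qed
    then show "q \<in> H n" using qw unfolding wants_def by auto
  qed
  from hn show ?thesis unfolding handled_def
  proof (elim disjE conjE)
    assume "\<exists>s\<in>{1..t}. coded N v \<in> set (ncmi_tx N ps H sp s)"
    then show ?thesis unfolding decoded_by_def using pc sub by blast
  next
    assume vm: "v \<in> set (Ml N ps H)" and f: "\<exists>s\<in>{1..t}. fst (sp v) \<in> set (ncmi_tx N ps H sp s)"
      and sn: "\<exists>s\<in>{1..t}. snd (sp v) \<in> set (ncmi_tx N ps H sp s)"
    have u: "fst (sp v) \<union> snd (sp v) = coded N v" using vs vm unfolding valid_split_def by blast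
    show ?thesis
    proof (cases "p \<in> fst (sp v)")
      case True
      have "fst (sp v) - {p} \<subseteq> H n" using sub u by blast
      then show ?thesis unfolding decoded_by_def using f True by blast
    next
      case False
      then have "p \<in> snd (sp v)" using u pc by blast
      moreover have "snd (sp v) - {p} \<subseteq> H n" using sub u by blast
      ultimately show ?thesis unfolding decoded_by_def using sn by blast
    qed
  qed
qed

lemma all_dec:
  fixes N :: nat and ps :: "'p list" and H :: "nat \<Rightarrow> 'p set" and sp :: "'p vec \<Rightarrow> 'p set \<times> 'p set" and t :: nat
  assumes "distinct ps" "\<forall>p\<in>set ps. \<exists>n<N. p \<in> wants ps H n" "valid_split N ps H sp"
    and d: "dn (ncmi_state N ps H sp t)"
  shows "all_decoded N ps H sp t"
proof -
  have G: "(\<forall>u\<in>set (grouping N ps H). Gp N ps H u) \<and>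
         (\<forall>p\<in>set ps. \<forall>n<N. p \<in> wants ps H n \<longrightarrow> (\<exists>u\<in>set (grouping N ps H). u n = Some p))"
    using Gf_props[OF assms(1,2)] unfolding grouping_Gf by blast
  have hd: "\<forall>v\<in>set (grouping N ps H). handled N ps H sp t v"
    using trace_inv[where N=N and ps=ps and H=H and sp=sp and k=t] d
    by (cases "ncmi_state N ps H sp t") (auto simp: dn_def)
  show ?thesis unfolding all_decoded_def
  proof (intro allI impI ballI)
    fix n p assume n: "n < N" and pw: "p \<in> wants ps H n"
    then have "p \<in> set ps" unfolding wants_def by auto
    then obtain u where "u \<in> set (grouping N ps H)" "u n = Some p" using G n pw by blast
    then show "decoded_by N ps H sp t n p"
      using decode_one[OF _ _ _ n _ assms(3)] G hd by blast
  qed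
qed

lemma Mc_Md_excl: "\<not> (is_Mc N v \<and> is_Md N v)"
  unfolding is_Mc_def is_Md_def by blast

lemma count1: "length (filter (is_Mc N) xs) + 2 * length (filter (is_Ml N) xs) + length (filter (is_Md N) xs)
   = sum_list (map (\<lambda>v. if is_Mc N v then 1 else if is_Md N v then 1 else 2::nat) xs)"
proof (induction xs)
  case (Cons a xs)
  consider "is_Mc N a" "\<not> is_Md N a" "\<not> is_Ml N a" | "\<not> is_Mc N a" "is_Md N a" "\<not> is_Ml N a"
    | "\<not> is_Mc N a" "\<not> is_Md N a" "is_Ml N a"
    using Mc_Md_excl[of N a] unfolding is_Ml_def by blast
  then show ?case using Cons.IH by cases simp_all
qed simp

lemma count2: "length (filter (is_Mc N) xs) + length (filter (is_Ml N) xs)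
   = sum_list (map (\<lambda>v. if is_Md N v then 0 else 1::nat) xs)"
proof (induction xs)
  case (Cons a xs)
  consider "is_Mc N a" "\<not> is_Md N a" "\<not> is_Ml N a" | "\<not> is_Mc N a" "is_Md N a" "\<not> is_Ml N a"
    | "\<not> is_Mc N a" "\<not> is_Md N a" "is_Ml N a"
    using Mc_Md_excl[of N a] unfolding is_Ml_def by blast
  then show ?case using Cons.IH by cases simp_all
qed simp

lemma card_ge1: "p \<in> S \<Longrightarrow> finite S \<Longrightarrow> 1 \<le> card S"
proof -
  assume "p \<in> S" "finite S"
  then have "0 < card S" using card_gt_0_iff[of S] by blast
  then show ?thesis by simp
qed

lemma bound_M:
  assumes "distinct ps" "\<forall>p\<in>set ps. \<exists>n<N. p \<in> wants ps H n"
  shows "length (Mc N ps H) + 2 * length (Ml N ps H) + length (Md N ps H) \<le> length ps"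
proof -
  have G: "(\<forall>u\<in>set (grouping N ps H). Gp N ps H u) \<and>
         (\<forall>A. sum_list (map (\<lambda>u. card (coded N u \<inter> A)) (grouping N ps H)) \<le> card (set ps \<inter> A))"
    using Gf_props[OF assms(1,2)] unfolding grouping_Gf by blast
  let ?w = "\<lambda>v. if is_Mc N v then 1 else if is_Md N v then 1 else 2::nat"
  have "length (Mc N ps H) + 2 * length (Ml N ps H) + length (Md N ps H) = sum_list (map ?w (grouping N ps H))"
    unfolding Mc_def Ml_def Md_def by (rule count1)
  also have "\<dots> \<le> sum_list (map (\<lambda>u. card (coded N u \<inter> UNIV)) (grouping N ps H))"
  proof (rule sum_list_mono)
    fix v assume vg: "v \<in> set (grouping N ps H)"
    have ne: "coded N v \<noteq> {}" using G vg unfolding Gp_def by blast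
    show "?w v \<le> card (coded N v \<inter> UNIV)"
    proof (cases "is_Mc N v \<or> is_Md N v")
      case True
      obtain p where "p \<in> coded N v" using ne by blast
      then have "1 \<le> card (coded N v \<inter> UNIV)" using coded_finite[of N v] card_ge1[of p] by simp
      then show ?thesis using True by auto
    next
      case False
      have nd: "\<forall>n<N. v n \<noteq> None" using False unfolding is_Md_def by simp
      then have "\<not> (\<forall>n<N. \<forall>m<N. v n = v m)" using False unfolding is_Mc_def by blast
      then obtain n m where nm: "n < N" "m < N" "v n \<noteq> v m" by blast
      obtain p where p: "v n = Some p" using nd nm(1) by blast
      obtain q where q: "v m = Some q" using nd nm(2) by blast
      have pq: "v n = Some p" "v m = Some q" "p \<noteq> q" using p q nm(3) by auto
      have "{p, q} \<subseteq> coded N v" unfolding coded_def using pq nm by auto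
      then have "card {p,q} \<le> card (coded N v)" by (rule card_mono[OF coded_finite])
      then show ?thesis using False pq(3) by simp
    qed
  qed
  also have "\<dots> \<le> card (set ps \<inter> UNIV)" using G by blast
  also have "\<dots> = length ps" using assms(1) by (simp add: distinct_card)
  finally show ?thesis .
qed

lemma bound_W:
  assumes "distinct ps" "\<forall>p\<in>set ps. \<exists>n<N. p \<in> wants ps H n" "n < N"
  shows "length (Mc N ps H) + length (Ml N ps H) \<le> card (wants ps H n)"
proof -
  have G: "(\<forall>u\<in>set (grouping N ps H). Gp N ps H u) \<and>
         (\<forall>A. sum_list (map (\<lambda>u. card (coded N u \<inter> A)) (grouping N ps H)) \<le> card (set ps \<inter> A))"
    using Gf_props[OF assms(1,2)] unfolding grouping_Gf by blast
  let ?w = "\<lambda>v. if is_Md N v then 0 else 1::nat"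
  have "length (Mc N ps H) + length (Ml N ps H) = sum_list (map ?w (grouping N ps H))"
    unfolding Mc_def Ml_def by (rule count2)
  also have "\<dots> \<le> sum_list (map (\<lambda>u. card (coded N u \<inter> wants ps H n)) (grouping N ps H))"
  proof (rule sum_list_mono)
    fix v assume vg: "v \<in> set (grouping N ps H)"
    show "?w v \<le> card (coded N v \<inter> wants ps H n)"
    proof (cases "is_Md N v")
      case True then show ?thesis by simp
    next
      case False
      then obtain p where p: "v n = Some p" using assms(3) unfolding is_Md_def by auto
      then have "p \<in> wants ps H n" using G vg assms(3) unfolding Gp_def by blast
      moreover have "p \<in> coded N v" unfolding coded_def using p assms(3) by auto
      ultimately have "1 \<le> card (coded N v \<inter> wants ps H n)"
        using card_ge1[of p "coded N v \<inter> wants ps H n"] coded_finite[of N v] by auto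
      then show ?thesis using False by simp
    qed
  qed
  also have "\<dots> \<le> card (set ps \<inter> wants ps H n)" using G by blast
  also have "set ps \<inter> wants ps H n = wants ps H n" unfolding wants_def by auto
  finally show ?thesis .
qed



theorem theorem2:
  fixes N :: nat and ps :: "'p list" and H :: "nat \<Rightarrow> 'p set"
    and sp :: "'p vec \<Rightarrow> 'p set \<times> 'p set"
  assumes "N \<ge> 2"
    and "distinct ps"
    and "\<forall>n<N. H n \<subseteq> set ps"
    and "\<forall>p\<in>set ps. \<exists>n<N. p \<in> wants ps H n"
    and "valid_split N ps H sp"
  shows "int (completion_time N ps H sp) \<le>
    \<lceil>min (max (real (length ps) / 2) (real (length (Mc N ps H))))
         (max (real (length (Mc N ps H)))
              (max ((2 * real (Min ((\<lambda>n. card (wants ps H n)) ` {..<N})) + real (length (Md N ps H))) / 3)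
                   ((real (Min ((\<lambda>n. card (wants ps H n)) ` {..<N})) + real (length (Md N ps H))) / 2)))\<rceil>"
proof -
  define F where "F = (\<lambda>s. snd (ncmi_step N sp s))"
  define init where "init = ncmi_init N ps H"
  define c where "c = length (Mc N ps H)"
  define l where "l = length (Ml N ps H)"
  define d where "d = length (Md N ps H)"
  define W where "W = Min ((\<lambda>n. card (wants ps H n)) ` {..<N})"
  define RA where "RA = max (real (length ps) / 2) (real c)"
  define RB where "RB = max (real c) (max ((2 * real W + real d) / 3) ((real W + real d) / 2))"
  have ivi: "iv init" unfolding init_def ncmi_init_def iv_def by simp
  have st: "ncmi_state N ps H sp k = (F ^^ k) init" for k
    unfolding F_def init_def by (rule state_funpow)
  have done_le: "dn ((F ^^ k) init) \<Longrightarrow> completion_time N ps H sp \<le> k" for k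
    unfolding completion_time_def
    by (rule Least_le, rule all_dec[OF assms(2,4,5)]) (simp add: st)
  have dA: "dn ((F ^^ nat \<lceil>gA init\<rceil>) init)"
  proof (rule iter_gen[of F gA])
    show "\<And>st. iv st \<Longrightarrow> \<not> dn st \<Longrightarrow> dn (F st) \<or> gA (F st) + 1 \<le> gA st" unfolding F_def by (rule dec_A)
    show "\<And>st. \<not> dn st \<Longrightarrow> 0 < gA st" by (rule pos_A)
    show "\<And>st. iv st \<Longrightarrow> iv (F st)" unfolding F_def by (rule step_iv)
    show "\<And>st. dn st \<Longrightarrow> F st = st" unfolding F_def by (rule step_done)
  qed (use ivi in auto)
  have dB: "dn ((F ^^ nat \<lceil>gB init\<rceil>) init)"
  proof (rule iter_gen[of F gB])
    show "\<And>st. iv st \<Longrightarrow> \<not> dn st \<Longrightarrow> dn (F st) \<or> gB (F st) + 1 \<le> gB st" unfolding F_def by (rule dec_B)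
    show "\<And>st. \<not> dn st \<Longrightarrow> 0 < gB st" by (rule pos_B)
    show "\<And>st. iv st \<Longrightarrow> iv (F st)" unfolding F_def by (rule step_iv)
    show "\<And>st. dn st \<Longrightarrow> F st = st" unfolding F_def by (rule step_done)
  qed (use ivi in auto)
  have gAi: "gA init = max (real c) ((real c + 2 * real l + real d) / 2)"
    unfolding gA_def init_def ncmi_init_def c_def l_def d_def by simp
  have gBi: "gB init = max (real c) (max ((2 * real c + 2 * real l + real d) / 3) ((real c + real l + real d) / 2))"
    unfolding gB_def init_def ncmi_init_def c_def l_def d_def by simp
  have bM: "c + 2 * l + d \<le> length ps" unfolding c_def l_def d_def by (rule bound_M[OF assms(2,4)])
  have fin: "finite ((\<lambda>n. card (wants ps H n)) ` {..<N})" by simp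
  have "0 \<in> {..<N}" using assms(1) by simp
  then have ne: "(\<lambda>n. card (wants ps H n)) ` {..<N} \<noteq> {}" by blast
  obtain n0 where n0: "n0 < N" "W = card (wants ps H n0)"
    using Min_in[OF fin ne] unfolding W_def by auto
  have bW: "c + l \<le> W" unfolding c_def l_def n0(2) by (rule bound_W[OF assms(2,4) n0(1)])
  have rM: "real c + 2 * real l + real d \<le> real (length ps)" using bM by linarith
  have rW: "real c + real l \<le> real W" using bW by linarith
  have gA_le: "gA init \<le> RA" unfolding gAi RA_def using rM by (auto simp: max_def)
  have gB_le: "gB init \<le> RB" unfolding gBi RB_def using rW by (auto simp: max_def)
  have gA0: "0 \<le> gA init" unfolding gAi by simp
  have gB0: "0 \<le> gB init" unfolding gBi by simp
  have cA: "int (completion_time N ps H sp) \<le> \<lceil>RA\<rceil>"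
  proof -
    have "completion_time N ps H sp \<le> nat \<lceil>gA init\<rceil>" by (rule done_le[OF dA])
    then have "int (completion_time N ps H sp) \<le> \<lceil>gA init\<rceil>" using gA0 by linarith
    also have "\<dots> \<le> \<lceil>RA\<rceil>" using gA_le by (rule ceiling_mono)
    finally show ?thesis .
  qed
  have cB: "int (completion_time N ps H sp) \<le> \<lceil>RB\<rceil>"
  proof -
    have "completion_time N ps H sp \<le> nat \<lceil>gB init\<rceil>" by (rule done_le[OF dB])
    then have "int (completion_time N ps H sp) \<le> \<lceil>gB init\<rceil>" using gB0 by linarith
    also have "\<dots> \<le> \<lceil>RB\<rceil>" using gB_le by (rule ceiling_mono)
    finally show ?thesis .
  qed
  have "int (completion_time N ps H sp) \<le> \<lceil>min RA RB\<rceil>"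
    using cA cB by (cases "RA \<le> RB") (auto simp: min_def)
  then show ?thesis unfolding RA_def RB_def W_def c_def d_def .
qed

end
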